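(* Every finitely generated free semigroup is weakly homogeneous.
   Context: A semigroup $S$ is weakly homogeneous if for every isomorphism $\varphi:A\to B$ between finitely generated subsemigroups $A,B$ of $S$ such that both $\varphi$ and $\varphi^{-1}:B\to A$ extend to endomorphisms of $S$, the map $\varphi$ extends to an automorphism of $S$. *)

theory Defs
  imports Main
begin

text \<open>A semigroup is given by a carrier set S and a binary operation f (total on the type,
  only its behaviour on S matters).\<close>

inductive_set gen_subsemigroup :: "('a \<Rightarrow> 'a \<Rightarrow> 'a) \<Rightarrow> 'a set \<Rightarrow> 'a set"
  for f :: "'a \<Rightarrow> 'a \<Rightarrow> 'a" and G :: "'a set" where
  base: "x \<in> G \<Longrightarrow> x \<in> gen_subsemigroup f G"
| step: "x \<in> gen_subsemigroup f G \<Longrightarrow> y \<in> gen_subsemigroup f G \<Longrightarrow> f x y \<in> gen_subsemigroup f G"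

definition fg_subsemigroup :: "'a set \<Rightarrow> ('a \<Rightarrow> 'a \<Rightarrow> 'a) \<Rightarrow> 'a set \<Rightarrow> bool" where
  "fg_subsemigroup S f A \<longleftrightarrow> (\<exists>G. finite G \<and> G \<subseteq> S \<and> A = gen_subsemigroup f G)"

definition hom_on :: "'a set \<Rightarrow> ('a \<Rightarrow> 'a \<Rightarrow> 'a) \<Rightarrow> ('a \<Rightarrow> 'a) \<Rightarrow> bool" where
  "hom_on A f h \<longleftrightarrow> (\<forall>x\<in>A. \<forall>y\<in>A. h (f x y) = f (h x) (h y))"

definition endomorphism :: "'a set \<Rightarrow> ('a \<Rightarrow> 'a \<Rightarrow> 'a) \<Rightarrow> ('a \<Rightarrow> 'a) \<Rightarrow> bool" where
  "endomorphism S f h \<longleftrightarrow> h ` S \<subseteq> S \<and> hom_on S f h"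

definition automorphism :: "'a set \<Rightarrow> ('a \<Rightarrow> 'a \<Rightarrow> 'a) \<Rightarrow> ('a \<Rightarrow> 'a) \<Rightarrow> bool" where
  "automorphism S f h \<longleftrightarrow> bij_betw h S S \<and> hom_on S f h"

definition semigroup_iso :: "('a \<Rightarrow> 'a \<Rightarrow> 'a) \<Rightarrow> ('a \<Rightarrow> 'a) \<Rightarrow> 'a set \<Rightarrow> 'a set \<Rightarrow> bool" where
  "semigroup_iso f \<phi> A B \<longleftrightarrow> bij_betw \<phi> A B \<and> hom_on A f \<phi>"

definition weakly_homogeneous :: "'a set \<Rightarrow> ('a \<Rightarrow> 'a \<Rightarrow> 'a) \<Rightarrow> bool" where
  "weakly_homogeneous S f \<longleftrightarrow>
    (\<forall>A B \<phi>. fg_subsemigroup S f A \<and> fg_subsemigroup S f B \<and> semigroup_iso f \<phi> A B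
       \<and> (\<exists>e. endomorphism S f e \<and> (\<forall>x\<in>A. e x = \<phi> x))
       \<and> (\<exists>e. endomorphism S f e \<and> (\<forall>y\<in>B. e y = inv_into A \<phi> y))
       \<longrightarrow> (\<exists>\<alpha>. automorphism S f \<alpha> \<and> (\<forall>x\<in>A. \<alpha> x = \<phi> x)))"

definition free_semigroup :: "'a set \<Rightarrow> 'a list set" where
  "free_semigroup X = {w. w \<noteq> [] \<and> set w \<subseteq> X}"

end

theory Submission
  imports Defs
begin

lemma gen_sub_S:
  assumes "G \<subseteq> free_semigroup X" shows "gen_subsemigroup (@) G \<subseteq> free_semigroup X"
proof
  fix w assume "w \<in> gen_subsemigroup (@) G" then show "w \<in> free_semigroup X"
    by induction (use assms in \<open>auto simp: free_semigroup_def\<close>)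
qed

lemma fg_S: "fg_subsemigroup (free_semigroup X) (@) A \<Longrightarrow> A \<subseteq> free_semigroup X"
  unfolding fg_subsemigroup_def using gen_sub_S by blast

lemma endo_concat:
  assumes e: "endomorphism (free_semigroup X) (@) e"
  shows "w \<in> free_semigroup X \<Longrightarrow> e w = concat (map (\<lambda>x. e [x]) w)"
proof (induction w)
  case Nil then show ?case by (simp add: free_semigroup_def)
next
  case (Cons x w)
  show ?case
  proof (cases "w = []")
    case True then show ?thesis by simp
  next
    case False
    have "[x] \<in> free_semigroup X" "w \<in> free_semigroup X"
      using Cons.prems False by (auto simp: free_semigroup_def)
    then have "e ([x] @ w) = e [x] @ e w" using e by (auto simp: endomorphism_def hom_on_def)
    then show ?thesis using Cons.IH \<open>w \<in> free_semigroup X\<close> by simp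
  qed
qed

lemma sum_list_ge:
  assumes "\<forall>x\<in>set w. (1::nat) \<le> f x"
  shows "length w \<le> sum_list (map f w)" and "x \<in> set w \<Longrightarrow> length w + f x - 1 \<le> sum_list (map f w)"
  using assms
proof (induction w)
  case Nil case 1 then show ?case by simp
next
  case Nil case 2 then show ?case by simp
next
  case (Cons a w) case 1 then show ?case using Cons by fastforce
next
  case (Cons a w) case 2 then show ?case using Cons by fastforce
qed

lemma endo_len:
  assumes e: "endomorphism (free_semigroup X) (@) e" and w: "w \<in> free_semigroup X"
  shows "length w \<le> length (e w)" and "x \<in> set w \<Longrightarrow> length w + length (e [x]) - 1 \<le> length (e w)"
proof -
  have ge: "\<forall>x\<in>set w. 1 \<le> length (e [x])"
  proof
    fix x assume "x \<in> set w"
    then have "[x] \<in> free_semigroup X" using w by (auto simp: free_semigroup_def)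
    then have "e [x] \<in> free_semigroup X" using e by (auto simp: endomorphism_def)
    then show "1 \<le> length (e [x])" by (cases "e [x]") (auto simp: free_semigroup_def)
  qed
  have l: "length (e w) = sum_list (map (\<lambda>x. length (e [x])) w)"
    using endo_concat[OF e w] by (simp add: length_concat comp_def)
  show "length w \<le> length (e w)" using sum_list_ge(1)[OF ge] l by simp
  show "x \<in> set w \<Longrightarrow> length w + length (e [x]) - 1 \<le> length (e w)"
    using sum_list_ge(2)[OF ge] l by simp
qed

lemma endo_letter:
  assumes e: "endomorphism (free_semigroup X) (@) e" and w: "w \<in> free_semigroup X"
    and len: "length (e w) \<le> length w" and x: "x \<in> set w"
  shows "\<exists>y. e [x] = [y]"
proof -
  have "[x] \<in> free_semigroup X" using w x by (auto simp: free_semigroup_def)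
  then have "e [x] \<in> free_semigroup X" using e by (auto simp: endomorphism_def)
  then have "1 \<le> length (e [x])" by (cases "e [x]") (auto simp: free_semigroup_def)
  moreover have "length w + length (e [x]) - 1 \<le> length (e w)" using endo_len(2)[OF e w x] .
  ultimately have "length (e [x]) = 1" using len by linarith
  then show ?thesis by (cases "e [x]") auto
qed

lemma extend_bij:
  assumes "finite X" "Y \<subseteq> X" "Z \<subseteq> X" "bij_betw s Y Z"
  shows "\<exists>p. bij_betw p X X \<and> (\<forall>x\<in>Y. p x = s x)"
proof -
  have fY: "finite Y" "finite Z" using assms finite_subset by auto
  have "card Y = card Z" using assms(4) bij_betw_same_card by blast
  then have "card (X - Y) = card (X - Z)" using assms fY by (simp add: card_Diff_subset)
  then obtain g where g: "bij_betw g (X - Y) (X - Z)"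
    using finite_same_card_bij assms(1) by (meson finite_Diff)
  define p where "p x = (if x \<in> Y then s x else g x)" for x
  have "bij_betw p Y Z" using assms(4) by (rule bij_betw_cong[THEN iffD1, rotated]) (simp add: p_def)
  moreover have "bij_betw p (X - Y) (X - Z)" using g by (rule bij_betw_cong[THEN iffD1, rotated]) (simp add: p_def)
  ultimately have "bij_betw p (Y \<union> (X - Y)) (Z \<union> (X - Z))" by (rule bij_betw_combine) auto
  moreover have "Y \<union> (X - Y) = X" "Z \<union> (X - Z) = X" using assms by auto
  ultimately show ?thesis by (auto simp: p_def)
qed

theorem mainTheorem4:
  fixes X :: "'a set"
  assumes "finite X"
  shows "weakly_homogeneous (free_semigroup X) (@)"
  unfolding weakly_homogeneous_def
proof (intro allI impI, elim conjE exE)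
  fix A B \<phi> e1 e2
  let ?S = "free_semigroup X"
  assume fA: "fg_subsemigroup ?S (@) A" and fB: "fg_subsemigroup ?S (@) B"
    and iso: "semigroup_iso (@) \<phi> A B"
    and E1: "endomorphism ?S (@) e1" and e1A: "\<forall>x\<in>A. e1 x = \<phi> x"
    and E2: "endomorphism ?S (@) e2" and e2B: "\<forall>y\<in>B. e2 y = inv_into A \<phi> y"
  have AS: "A \<subseteq> ?S" and BS: "B \<subseteq> ?S" using fg_S fA fB by auto
  have inj: "inj_on \<phi> A" and img: "\<phi> ` A = B" using iso by (auto simp: semigroup_iso_def bij_betw_def)
  have k1: "e2 (e1 w) = w" if "w \<in> A" for w
    using that e1A e2B inj img by auto
  have k2: "e1 (e2 v) = v" if "v \<in> B" for v
  proof -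
    have "inv_into A \<phi> v \<in> A" using that img by (metis inv_into_into)
    then show ?thesis using that e1A e2B img by (simp add: f_inv_into_f)
  qed
  have e1S: "e1 w \<in> ?S" if "w \<in> ?S" for w using E1 that by (auto simp: endomorphism_def)
  have e2S: "e2 w \<in> ?S" if "w \<in> ?S" for w using E2 that by (auto simp: endomorphism_def)
  have e1B: "e1 w \<in> B" if "w \<in> A" for w using that e1A img by auto
  have e2A: "e2 v \<in> A" if "v \<in> B" for v using that e2B img by (metis inv_into_into)
  define Y where "Y = \<Union> (set ` A)"
  define Z where "Z = \<Union> (set ` B)"
  define \<sigma> where "\<sigma> x = hd (e1 [x])" for x
  define \<tau> where "\<tau> x = hd (e2 [x])" for x
  have lA: "length (e1 w) \<le> length w" if "w \<in> A" for w
  proof -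
    have "w \<in> ?S" using that AS by auto
    have "length (e1 w) \<le> length (e2 (e1 w))" using endo_len(1)[OF E2 e1S[OF \<open>w \<in> ?S\<close>]] .
    then show ?thesis using k1[OF that] by simp
  qed
  have lB: "length (e2 v) \<le> length v" if "v \<in> B" for v
  proof -
    have "v \<in> ?S" using that BS by auto
    have "length (e2 v) \<le> length (e1 (e2 v))" using endo_len(1)[OF E1 e2S[OF \<open>v \<in> ?S\<close>]] .
    then show ?thesis using k2[OF that] by simp
  qed
  have s1: "e1 [x] = [\<sigma> x]" if xY: "x \<in> Y" for x
  proof -
    obtain w where w: "w \<in> A" "x \<in> set w" using xY Y_def by auto
    obtain y where "e1 [x] = [y]" using endo_letter[OF E1 _ lA[OF w(1)] w(2)] w AS by auto
    then show ?thesis by (simp add: \<sigma>_def)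
  qed
  have t1: "e2 [x] = [\<tau> x]" if xZ: "x \<in> Z" for x
  proof -
    obtain w where w: "w \<in> B" "x \<in> set w" using xZ Z_def by auto
    obtain y where "e2 [x] = [y]" using endo_letter[OF E2 _ lB[OF w(1)] w(2)] w BS by auto
    then show ?thesis by (simp add: \<tau>_def)
  qed
  have mA: "e1 w = map \<sigma> w" if "w \<in> A" for w
  proof -
    have "e1 w = concat (map (\<lambda>x. e1 [x]) w)" using endo_concat[OF E1] that AS by auto
    also have "map (\<lambda>x. e1 [x]) w = map (\<lambda>x. [\<sigma> x]) w"
      using s1 that Y_def by (intro map_cong) auto
    finally show ?thesis by (induction w) auto
  qed
  have mB: "e2 w = map \<tau> w" if "w \<in> B" for w
  proof -
    have "e2 w = concat (map (\<lambda>x. e2 [x]) w)" using endo_concat[OF E2] that BS by auto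
    also have "map (\<lambda>x. e2 [x]) w = map (\<lambda>x. [\<tau> x]) w"
      using t1 that Z_def by (intro map_cong) auto
    finally show ?thesis by (induction w) auto
  qed
  have sZ: "\<sigma> x \<in> Z" if xY: "x \<in> Y" for x
  proof -
    obtain w where w: "w \<in> A" "x \<in> set w" using xY Y_def by auto
    then have "\<sigma> x \<in> set (e1 w)" using mA by auto
    then show ?thesis using e1B[OF w(1)] Z_def by auto
  qed
  have tY: "\<tau> x \<in> Y" if xZ: "x \<in> Z" for x
  proof -
    obtain w where w: "w \<in> B" "x \<in> set w" using xZ Z_def by auto
    then have "\<tau> x \<in> set (e2 w)" using mB by auto
    then show ?thesis using e2A[OF w(1)] Y_def by auto
  qed
  have ts: "\<tau> (\<sigma> x) = x" if xY: "x \<in> Y" for x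
  proof -
    obtain w where w: "w \<in> A" "x \<in> set w" using xY Y_def by auto
    have "map \<tau> (map \<sigma> w) = w" using k1[OF w(1)] mB[OF e1B[OF w(1)]] mA[OF w(1)] by simp
    then have "map (\<tau> \<circ> \<sigma>) w = map (\<lambda>x. x) w" by simp
    then show ?thesis using w(2) map_eq_conv[of "\<tau> \<circ> \<sigma>" w "\<lambda>x. x"] by auto
  qed
  have st: "\<sigma> (\<tau> x) = x" if xZ: "x \<in> Z" for x
  proof -
    obtain w where w: "w \<in> B" "x \<in> set w" using xZ Z_def by auto
    have "map \<sigma> (map \<tau> w) = w" using k2[OF w(1)] mA[OF e2A[OF w(1)]] mB[OF w(1)] by simp
    then have "map (\<sigma> \<circ> \<tau>) w = map (\<lambda>x. x) w" by simp
    then show ?thesis using w(2) map_eq_conv[of "\<sigma> \<circ> \<tau>" w "\<lambda>x. x"] by auto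
  qed
  have bij: "bij_betw \<sigma> Y Z" using ts st sZ tY by (intro bij_betw_byWitness[where f'=\<tau>]) auto
  have YX: "Y \<subseteq> X" using AS Y_def by (auto simp: free_semigroup_def)
  have ZX: "Z \<subseteq> X" using BS Z_def by (auto simp: free_semigroup_def)
  obtain p where p: "bij_betw p X X" "\<forall>x\<in>Y. p x = \<sigma> x"
    using extend_bij[OF assms YX ZX bij] by blast
  let ?q = "inv_into X p"
  have q1: "?q (p x) = x" if "x \<in> X" for x using p(1) that by (simp add: bij_betw_inv_into_left)
  have q2: "p (?q x) = x" if "x \<in> X" for x using p(1) that by (simp add: bij_betw_inv_into_right)
  have pX: "p x \<in> X" if "x \<in> X" for x using p(1) that by (auto simp: bij_betw_def)
  have qX: "?q x \<in> X" if "x \<in> X" for x using p(1) that by (metis bij_betw_def inv_into_into)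
  have "bij_betw (map p) ?S ?S"
  proof (rule bij_betw_byWitness[where f'="map ?q"])
    show "\<forall>a\<in>?S. map ?q (map p a) = a" using q1 by (auto simp: free_semigroup_def intro!: map_idI)
    show "\<forall>a\<in>?S. map p (map ?q a) = a" using q2 by (auto simp: free_semigroup_def intro!: map_idI)
    show "map p ` ?S \<subseteq> ?S" using pX by (force simp: free_semigroup_def)
    show "map ?q ` ?S \<subseteq> ?S" using qX by (force simp: free_semigroup_def)
  qed
  then have "automorphism ?S (@) (map p)" by (simp add: automorphism_def hom_on_def)
  moreover have "\<forall>x\<in>A. map p x = \<phi> x"
  proof
    fix w assume w: "w \<in> A"
    have "map p w = map \<sigma> w" using p(2) w Y_def by (intro map_cong) auto
    then show "map p w = \<phi> w" using mA[OF w] e1A w by simp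
  qed
  ultimately show "\<exists>\<alpha>. automorphism ?S (@) \<alpha> \<and> (\<forall>x\<in>A. \<alpha> x = \<phi> x)" by blast
qed

end
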